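(* Let $G$ be a finite simple graph with edge weight function $w$, and let $w_1(u)=0$ for all $u\in V(G)$. If the maximum degree $\Delta$ of $G$ is greater than $1$, then all roots of $\eta_{(w,w_1)}(G,x)$ lie in the interval $[-2b_0\sqrt{\Delta-1},\,2b_0\sqrt{\Delta-1}]$, where $b_0=\max_{e\in E(G)}|w(e)|$.
   Context: An edge weight function $w$ assigns a nonzero complex number to each edge; induced subgraphs carry restricted weights. For $A\subseteq E(G)$, $w(A)=\prod_{e\in A}w(e)$. $\mu_w(G,x)=\sum_{M}(-1)^{|M|}|w(M)|^2x^{n-2|M|}$ over all matchings $M$ (including empty), $n=|V(G)|$. $\eta_{(w,w_1)}(G,x)=\sum_{S\subseteq V(G)}(-1)^{|V(G)\setminus S|}\big(\prod_{v\in V(G)\setminus S}w_1(v)\big)\mu_w(G[S],x)$ with $G[S]$ the induced subgraph and $\mu_w$ of the empty graph equal to $1$. *)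

theory Defs
  imports Complex_Main
begin

definition simple_graph :: "'a set \<Rightarrow> 'a set set \<Rightarrow> bool" where
  "simple_graph V E \<longleftrightarrow> finite V \<and> (\<forall>e\<in>E. e \<subseteq> V \<and> card e = 2)"

definition matchings :: "'a set set \<Rightarrow> 'a set set set" where
  "matchings E = {M. M \<subseteq> E \<and> (\<forall>e\<in>M. \<forall>f\<in>M. e \<noteq> f \<longrightarrow> e \<inter> f = {})}"

definition induced_edges :: "'a set set \<Rightarrow> 'a set \<Rightarrow> 'a set set" where
  "induced_edges E S = {e\<in>E. e \<subseteq> S}"

definition mu_w :: "'a set \<Rightarrow> 'a set set \<Rightarrow> ('a set \<Rightarrow> complex) \<Rightarrow> complex \<Rightarrow> complex" where
  "mu_w V E w x = (\<Sum>M\<in>matchings E. (-1) ^ card M * complex_of_real ((\<Prod>e\<in>M. cmod (w e)) ^ 2)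
                      * x ^ (card V - 2 * card M))"

definition eta :: "'a set \<Rightarrow> 'a set set \<Rightarrow> ('a set \<Rightarrow> complex) \<Rightarrow> ('a \<Rightarrow> complex) \<Rightarrow> complex \<Rightarrow> complex" where
  "eta V E w w1 x = (\<Sum>S\<in>Pow V. (-1) ^ card (V - S) * (\<Prod>v\<in>V - S. w1 v)
                      * mu_w S (induced_edges E S) w x)"

definition degree :: "'a set set \<Rightarrow> 'a \<Rightarrow> nat" where
  "degree E v = card {e\<in>E. v \<in> e}"

definition max_degree :: "'a set \<Rightarrow> 'a set set \<Rightarrow> nat" where
  "max_degree V E = Max (degree E ` V)"

end

theory Submission
  imports Defs
begin


definition mg :: "'a set set \<Rightarrow> ('a set \<Rightarrow> complex) \<Rightarrow> 'a set \<Rightarrow> 'b::real_field \<Rightarrow> 'b" where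
  "mg E w S x = (\<Sum>M\<in>matchings (induced_edges E S). (-1) ^ card M * of_real (\<Prod>e\<in>M. (cmod (w e))^2)
                      * x ^ (card S - 2 * card M))"

lemma fin_IE:
  assumes "simple_graph V E" "S \<subseteq> V"
  shows "finite (induced_edges E S)"
proof -
  have "induced_edges E S \<subseteq> Pow S" unfolding induced_edges_def by auto
  moreover have "finite S" using assms unfolding simple_graph_def by (meson finite_subset)
  ultimately show ?thesis by (meson finite_Pow_iff finite_subset)
qed

lemma fin_match:
  assumes "simple_graph V E" "S \<subseteq> V"
  shows "finite (matchings (induced_edges E S))"
proof -
  have "matchings (induced_edges E S) \<subseteq> Pow (induced_edges E S)" unfolding matchings_def by auto
  thus ?thesis using fin_IE[OF assms] by (meson finite_Pow_iff finite_subset)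
qed

lemma match_card:
  assumes sg: "simple_graph V E" and SV: "S \<subseteq> V" and M: "M \<in> matchings (induced_edges E S)"
  shows "2 * card M \<le> card S"
proof -
  have fS: "finite S" using assms unfolding simple_graph_def by (meson finite_subset)
  have MS: "M \<subseteq> induced_edges E S" using M unfolding matchings_def by auto
  have fM: "finite M" using fin_IE[OF sg SV] MS finite_subset by blast
  have c2: "\<And>e. e \<in> M \<Longrightarrow> card e = 2" using MS sg unfolding simple_graph_def induced_edges_def by auto
  have fe: "\<And>e. e \<in> M \<Longrightarrow> finite e" using c2 card.infinite by fastforce
  have pw: "pairwise disjnt M" using M unfolding matchings_def pairwise_def disjnt_def by auto
  have "card (\<Union>M) = sum card M" by (rule card_Union_disjoint[OF pw fe])
  also have "\<dots> = 2 * card M" using c2 by simp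
  finally have "card (\<Union>M) = 2 * card M" .
  moreover have "\<Union>M \<subseteq> S" using MS unfolding induced_edges_def by auto
  ultimately show ?thesis using card_mono[OF fS] by metis
qed

lemma mg_empty:
  assumes "simple_graph V E"
  shows "mg E w {} x = 1"
proof -
  have "induced_edges E {} = {}" using assms unfolding induced_edges_def simple_graph_def by auto
  moreover have "matchings ({}::'a set set) = {{}}" unfolding matchings_def by auto
  ultimately show ?thesis unfolding mg_def by (simp only:) simp
qed

lemma mu_mg:
  assumes "simple_graph V E"
  shows "mu_w S (induced_edges E S) w x = mg E w S x"
  unfolding mu_w_def mg_def by (simp add: prod_power_distrib)

lemma eta_mg:
  assumes sg: "simple_graph V E" and w1: "\<forall>u\<in>V. w1 u = 0"
  shows "eta V E w w1 x = mg E w V x"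
proof -
  have fV: "finite V" using sg unfolding simple_graph_def by auto
  have "eta V E w w1 x = (-1) ^ card (V - V) * (\<Prod>v\<in>V - V. w1 v) * mu_w V (induced_edges E V) w x
     + (\<Sum>S\<in>Pow V - {V}. (-1) ^ card (V - S) * (\<Prod>v\<in>V - S. w1 v) * mu_w S (induced_edges E S) w x)"
    unfolding eta_def using fV by (subst sum.remove[of "Pow V" V]) auto
  also have "(\<Sum>S\<in>Pow V - {V}. (-1) ^ card (V - S) * (\<Prod>v\<in>V - S. w1 v) * mu_w S (induced_edges E S) w x) = 0"
  proof (rule sum.neutral, rule ballI)
    fix S assume "S \<in> Pow V - {V}"
    then obtain v where "v \<in> V - S" by blast
    hence "(\<Prod>v\<in>V - S. w1 v) = 0" using w1 fV by (meson DiffD1 finite_Diff prod_zero_iff)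
    thus "(-1) ^ card (V - S) * (\<Prod>v\<in>V - S. w1 v) * mu_w S (induced_edges E S) w x = 0" by simp
  qed
  finally have "eta V E w w1 x = mu_w V (induced_edges E V) w x" by simp
  moreover have "induced_edges E V = E" using sg unfolding simple_graph_def induced_edges_def by auto
  ultimately show ?thesis using mu_mg[OF sg, of V w x] by simp
qed



lemma mg_rec:
  assumes sg: "simple_graph V E" and SV: "S \<subseteq> V" and u: "u \<in> S"
  shows "mg E w S x = x * mg E w (S - {u}) x
     - (\<Sum>e\<in>{e\<in>induced_edges E S. u \<in> e}. of_real ((cmod (w e))^2) * mg E w (S - e) x)"
proof -
  define f where "f T M = (-1) ^ card M * of_real (\<Prod>e\<in>M. (cmod (w e))^2) * x ^ (card T - 2 * card M)"
    for T :: "'a set" and M :: "'a set set"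
  define MS where "MS = matchings (induced_edges E S)"
  define A where "A = {M\<in>MS. \<forall>e\<in>M. u \<notin> e}"
  define Eu where "Eu = {e\<in>induced_edges E S. u \<in> e}"
  have mgf: "\<And>T. mg E w T x = sum (f T) (matchings (induced_edges E T))" unfolding mg_def f_def by simp
  have fS: "finite S" using assms unfolding simple_graph_def by (meson finite_subset)
  have fMS: "finite MS" unfolding MS_def using fin_match[OF sg SV] .
  have "mg E w S x = sum (f S) (MS - A) + sum (f S) A"
    unfolding mgf MS_def[symmetric] by (rule sum.subset_diff) (auto simp: A_def fMS)
  moreover have A_eq: "A = matchings (induced_edges E (S - {u}))"
    unfolding A_def MS_def matchings_def induced_edges_def by auto
  have partA: "sum (f S) A = x * mg E w (S - {u}) x"
    unfolding mgf A_eq sum_distrib_left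
  proof (rule sum.cong[OF refl])
    fix M assume M: "M \<in> matchings (induced_edges E (S - {u}))"
    have "2 * card M \<le> card (S - {u})" using match_card[OF sg _ M] SV by blast
    moreover have "card (S - {u}) = card S - 1" using u fS by simp
    moreover have "card S \<ge> 1" using u fS card_0_eq by fastforce
    ultimately have "card S - 2 * card M = Suc (card (S - {u}) - 2 * card M)" by linarith
    hence "x ^ (card S - 2 * card M) = x * x ^ (card (S - {u}) - 2 * card M)" by simp
    thus "f S M = x * f (S - {u}) M" unfolding f_def by (simp only:) (simp add: mult_ac)
  qed
  have Eu_facts: "\<And>e. e \<in> Eu \<Longrightarrow> e \<in> E \<and> e \<subseteq> S \<and> u \<in> e \<and> card e = 2 \<and> finite e"
    using sg unfolding Eu_def induced_edges_def simple_graph_def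
    by (auto intro: card_ge_0_finite)
  have B_eq: "MS - A = (\<lambda>(e,M). insert e M) ` (SIGMA e:Eu. matchings (induced_edges E (S - e)))"
  proof
    show "MS - A \<subseteq> (\<lambda>(e,M). insert e M) ` (SIGMA e:Eu. matchings (induced_edges E (S - e)))"
    proof
      fix M assume M: "M \<in> MS - A"
      then obtain e where e: "e \<in> M" "u \<in> e" unfolding A_def by auto
      have MM: "M \<subseteq> induced_edges E S" "\<forall>e\<in>M. \<forall>f\<in>M. e \<noteq> f \<longrightarrow> e \<inter> f = {}"
        using M unfolding MS_def matchings_def by auto
      have "e \<in> Eu" using e MM unfolding Eu_def by auto
      moreover have "M - {e} \<in> matchings (induced_edges E (S - e))"
      proof -
        have "\<And>f. f \<in> M - {e} \<Longrightarrow> f \<in> E \<and> f \<subseteq> S - e"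
        proof -
          fix f assume f: "f \<in> M - {e}"
          hence "f \<inter> e = {}" using MM(2) e(1) by auto
          moreover have "f \<in> E" "f \<subseteq> S" using f MM(1) unfolding induced_edges_def by auto
          ultimately show "f \<in> E \<and> f \<subseteq> S - e" by auto
        qed
        thus ?thesis using MM(2) unfolding matchings_def induced_edges_def by auto
      qed
      moreover have "M = insert e (M - {e})" using e by auto
      ultimately show "M \<in> (\<lambda>(e,M). insert e M) ` (SIGMA e:Eu. matchings (induced_edges E (S - e)))"
        by blast
    qed
  next
    show "(\<lambda>(e,M). insert e M) ` (SIGMA e:Eu. matchings (induced_edges E (S - e))) \<subseteq> MS - A"
    proof clarify
      fix e M assume e: "e \<in> Eu" and M: "M \<in> matchings (induced_edges E (S - e))"
      have ef: "e \<in> E" "e \<subseteq> S" "u \<in> e" using Eu_facts[OF e] by auto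
      have M1: "\<forall>f\<in>M. f \<in> E \<and> f \<subseteq> S - e" "\<forall>g\<in>M. \<forall>f\<in>M. g \<noteq> f \<longrightarrow> g \<inter> f = {}"
        using M unfolding matchings_def induced_edges_def by auto
      have "insert e M \<in> MS"
        unfolding MS_def matchings_def induced_edges_def using M1 ef by auto
      moreover have "insert e M \<notin> A" unfolding A_def using ef by auto
      ultimately show "insert e M \<in> MS - A" by blast
    qed
  qed
  have inj: "inj_on (\<lambda>(e,M). insert e M) (SIGMA e:Eu. matchings (induced_edges E (S - e)))"
  proof (rule inj_onI, clarify)
    fix e1 M1 e2 M2
    assume e1: "e1 \<in> Eu" and M1: "M1 \<in> matchings (induced_edges E (S - e1))"
      and e2: "e2 \<in> Eu" and M2: "M2 \<in> matchings (induced_edges E (S - e2))"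
      and eq: "insert e1 M1 = insert e2 M2"
    have nu1: "\<forall>f\<in>M1. u \<notin> f" using M1 Eu_facts[OF e1] unfolding matchings_def induced_edges_def by auto
    have nu2: "\<forall>f\<in>M2. u \<notin> f" using M2 Eu_facts[OF e2] unfolding matchings_def induced_edges_def by auto
    have "e1 \<in> insert e2 M2" using eq by auto
    hence "e1 = e2" using nu2 Eu_facts[OF e1] by auto
    moreover have "e1 \<notin> M1" "e2 \<notin> M2" using nu1 nu2 Eu_facts[OF e1] Eu_facts[OF e2] by auto
    ultimately show "e1 = e2 \<and> M1 = M2" using eq insert_ident[of e1 M1 M2] by simp
  qed
  have fEu: "finite Eu" unfolding Eu_def using fin_IE[OF sg SV] by simp
  have partB: "sum (f S) (MS - A) = - (\<Sum>e\<in>Eu. of_real ((cmod (w e))^2) * mg E w (S - e) x)"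
  proof -
    have "sum (f S) (MS - A) = sum (f S \<circ> (\<lambda>(e,M). insert e M)) (SIGMA e:Eu. matchings (induced_edges E (S - e)))"
      unfolding B_eq by (rule sum.reindex[OF inj])
    also have "\<dots> = (\<Sum>e\<in>Eu. \<Sum>M\<in>matchings (induced_edges E (S - e)). f S (insert e M))"
    proof -
      have fin: "\<forall>e\<in>Eu. finite (matchings (induced_edges E (S - e)))"
        using fin_match[OF sg] SV by blast
      show ?thesis using sum.Sigma[OF fEu fin, of "\<lambda>e M. f S (insert e M)"]
        by (simp add: split_def comp_def)
    qed
    also have "\<dots> = (\<Sum>e\<in>Eu. - (of_real ((cmod (w e))^2) * mg E w (S - e) x))"
    proof (rule sum.cong[OF refl])
      fix e assume e: "e \<in> Eu"
      note ef = Eu_facts[OF e]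
      have cSe: "card (S - e) = card S - 2" using ef fS by (simp add: card_Diff_subset)
      have "sum (f S \<circ> insert e) (matchings (induced_edges E (S - e)))
          = (\<Sum>M\<in>matchings (induced_edges E (S - e)). - (of_real ((cmod (w e))^2) * f (S - e) M))"
      proof (rule sum.cong[OF refl])
        fix M assume M: "M \<in> matchings (induced_edges E (S - e))"
        have "M \<subseteq> induced_edges E (S - e)" using M unfolding matchings_def by simp
        moreover have "finite (induced_edges E (S - e))" using fin_IE[OF sg, of "S - e"] SV by auto
        ultimately have fM: "finite M" by (rule finite_subset)
        have "e \<noteq> {}" using ef by auto
        hence eM: "e \<notin> M" using M ef unfolding matchings_def induced_edges_def by auto
        have "card S - 2 * Suc (card M) = card (S - e) - 2 * card M" using cSe by simp
        hence "card S - 2 * card (insert e M) = card (S - e) - 2 * card M" using fM eM by simp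
        moreover have "(\<Prod>e\<in>insert e M. (cmod (w e))^2) = (cmod (w e))^2 * (\<Prod>e\<in>M. (cmod (w e))^2)"
          using fM eM by simp
        moreover have "(-1::'b) ^ card (insert e M) = - ((-1) ^ card M)" using fM eM by simp
        ultimately show "(f S \<circ> insert e) M = - (of_real ((cmod (w e))^2) * f (S - e) M)"
          unfolding f_def comp_def by (simp only:) (simp add: mult_ac)
      qed
      thus "(\<Sum>M\<in>matchings (induced_edges E (S - e)). f S (insert e M))
          = - (of_real ((cmod (w e))^2) * mg E w (S - e) x)"
        unfolding mgf by (simp add: sum_distrib_left sum_negf comp_def)
    qed
    finally show ?thesis by (simp add: sum_negf)
  qed
  ultimately show ?thesis using partA partB unfolding Eu_def by simp
qed



lemma im_flip:
  fixes a b :: complex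
  assumes "Im (b / a) > 0"
  shows "Im (a / b) < 0"
proof -
  define N where "N = Im b * Re a - Re b * Im a"
  have h1: "Im (b / a) = N / ((Re a)\<^sup>2 + (Im a)\<^sup>2)" unfolding N_def by (rule Im_divide)
  have h2: "Im (a / b) = - N / ((Re b)\<^sup>2 + (Im b)\<^sup>2)" unfolding N_def Im_divide by (simp add: algebra_simps)
  have "0 \<le> (Re a)\<^sup>2 + (Im a)\<^sup>2" by simp
  moreover have "0 < N \<and> 0 < (Re a)\<^sup>2 + (Im a)\<^sup>2 \<or> N < 0 \<and> (Re a)\<^sup>2 + (Im a)\<^sup>2 < 0"
    using assms h1 by (simp add: zero_less_divide_iff)
  ultimately have Np: "N > 0" by linarith
  have "(Re b)\<^sup>2 + (Im b)\<^sup>2 \<noteq> 0"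
  proof
    assume "(Re b)\<^sup>2 + (Im b)\<^sup>2 = 0"
    hence "Re b = 0" "Im b = 0" by (simp_all add: sum_power2_eq_zero_iff)
    hence "N = 0" unfolding N_def by simp
    thus False using Np by simp
  qed
  moreover have "0 \<le> (Re b)\<^sup>2 + (Im b)\<^sup>2" by simp
  ultimately have "(Re b)\<^sup>2 + (Im b)\<^sup>2 > 0" by linarith
  thus ?thesis using h2 Np by (simp add: divide_neg_pos)
qed

lemma mg_of_real: "mg E w S (of_real t :: complex) = of_real (mg E w S t)"
  unfolding mg_def of_real_sum by (rule sum.cong) simp_all

lemma mg_cnj: "mg E w S (cnj z) = cnj (mg E w S z)"
  unfolding mg_def cnj_sum by (rule sum.cong) simp_all

lemma mg_neg:
  assumes sg: "simple_graph V E" and SV: "S \<subseteq> V"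
  shows "mg E w S (- (t::real)) = (-1) ^ card S * mg E w S t"
  unfolding mg_def sum_distrib_left
proof (rule sum.cong[OF refl])
  fix M assume M: "M \<in> matchings (induced_edges E S)"
  have le: "2 * card M \<le> card S" by (rule match_card[OF sg SV M])
  then obtain m where m: "card S = 2 * card M + m" using le_Suc_ex by blast
  have k: "card S - 2 * card M = m" using m by simp
  have s1: "(-1::real) ^ card S = (-1) ^ m" unfolding m power_add power_mult by simp
  have "(- t) ^ (card S - 2 * card M) = (-1) ^ card S * t ^ (card S - 2 * card M)"
    unfolding k s1 by (rule power_minus)
  thus "(- 1) ^ card M * of_real (\<Prod>e\<in>M. (cmod (w e))\<^sup>2) * (- t) ^ (card S - 2 * card M) =
         (- 1) ^ card S * ((- 1) ^ card M * of_real (\<Prod>e\<in>M. (cmod (w e))\<^sup>2) * t ^ (card S - 2 * card M))"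
    by (simp only:) (simp add: mult_ac)
qed

lemma other_end:
  assumes sg: "simple_graph V E" and e: "e \<in> {e\<in>induced_edges E S. u \<in> e}"
  shows "\<exists>v. v \<noteq> u \<and> v \<in> S - {u} \<and> e = {u, v} \<and> S - e = (S - {u}) - {v}"
proof -
  have "card e = 2" "e \<subseteq> S" "u \<in> e" using e sg unfolding induced_edges_def simple_graph_def by auto
  then obtain a b where ab: "e = {a, b}" "a \<noteq> b" by (meson card_2_iff)
  then obtain v where "e = {u, v}" "v \<noteq> u" using \<open>u \<in> e\<close> by auto
  thus ?thesis using \<open>e \<subseteq> S\<close> by auto
qed

lemma deg_le:
  assumes sg: "simple_graph V E"
  shows "card {e\<in>induced_edges E S. u \<in> e} \<le> degree E u"
proof -
  have "finite E" using sg unfolding simple_graph_def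
    by (meson Pow_iff finite_Pow_iff finite_subset subsetI)
  thus ?thesis unfolding degree_def induced_edges_def by (intro card_mono) auto
qed

lemma deg_drop:
  assumes sg: "simple_graph V E" and SV: "S \<subseteq> V" and e: "e \<in> induced_edges E S" "e = {u, v}" "u \<noteq> v"
  shows "card {f\<in>induced_edges E (S - {u}). v \<in> f} < card {f\<in>induced_edges E S. v \<in> f}"
proof (rule psubset_card_mono)
  show "finite {f\<in>induced_edges E S. v \<in> f}" using fin_IE[OF sg SV] by simp
  have "{f\<in>induced_edges E (S - {u}). v \<in> f} \<subseteq> {f\<in>induced_edges E S. v \<in> f}"
    unfolding induced_edges_def by auto
  moreover have "e \<notin> {f\<in>induced_edges E (S - {u}). v \<in> f}" using e unfolding induced_edges_def by auto
  moreover have "e \<in> {f\<in>induced_edges E S. v \<in> f}" using e by auto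
  ultimately show "{f\<in>induced_edges E (S - {u}). v \<in> f} \<subset> {f\<in>induced_edges E S. v \<in> f}" by blast
qed



lemma imag_pos:
  assumes sg: "simple_graph V E" and z: "Im z > 0"
  shows "S \<subseteq> V \<Longrightarrow> mg E w S z \<noteq> 0 \<and> (\<forall>u\<in>S. Im (mg E w S z / mg E w (S - {u}) z) > 0)"
proof (induction "card S" arbitrary: S rule: less_induct)
  case less
  have fS: "finite S" using less.prems sg unfolding simple_graph_def by (meson finite_subset)
  have ratio: "\<forall>u\<in>S. Im (mg E w S z / mg E w (S - {u}) z) > 0"
  proof
    fix u assume u: "u \<in> S"
    define m0 where "m0 = mg E w (S - {u}) z"
    define Eu where "Eu = {e\<in>induced_edges E S. u \<in> e}"
    have cu: "card (S - {u}) < card S" using u fS by (meson card_Diff1_less)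
    have Su: "S - {u} \<subseteq> V" using less.prems by auto
    have IHu: "mg E w (S - {u}) z \<noteq> 0 \<and> (\<forall>v\<in>S - {u}. Im (mg E w (S - {u}) z / mg E w (S - {u} - {v}) z) > 0)"
      by (rule less.hyps[OF cu Su])
    hence m0: "m0 \<noteq> 0" unfolding m0_def by simp
    have each: "\<And>e. e \<in> Eu \<Longrightarrow> Im (mg E w (S - e) z / m0) \<le> 0"
    proof -
      fix e assume e: "e \<in> Eu"
      obtain v where v: "v \<in> S - {u}" "S - e = S - {u} - {v}" using other_end[OF sg e[unfolded Eu_def]] by blast
      have "Im (m0 / mg E w (S - e) z) > 0" using IHu v unfolding m0_def by simp
      thus "Im (mg E w (S - e) z / m0) \<le> 0" using im_flip by (meson less_imp_le)
    qed
    have "mg E w S z / m0 = z - (\<Sum>e\<in>Eu. of_real ((cmod (w e))^2) * (mg E w (S - e) z / m0))"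
      unfolding mg_rec[OF sg less.prems u] m0_def[symmetric] Eu_def[symmetric] using m0
      by (simp add: diff_divide_distrib sum_divide_distrib)
    hence "Im (mg E w S z / m0) = Im z - (\<Sum>e\<in>Eu. Im (of_real ((cmod (w e))^2) * (mg E w (S - e) z / m0)))"
      by (simp only: minus_complex.sel Im_sum)
    also have "(\<Sum>e\<in>Eu. Im (of_real ((cmod (w e))^2) * (mg E w (S - e) z / m0)))
       = (\<Sum>e\<in>Eu. (cmod (w e))^2 * Im (mg E w (S - e) z / m0))"
      by (rule sum.cong[OF refl]) (simp only: times_complex.sel Re_complex_of_real Im_complex_of_real mult_zero_left add_0_right)
    finally have "Im (mg E w S z / m0) = Im z - (\<Sum>e\<in>Eu. (cmod (w e))^2 * Im (mg E w (S - e) z / m0))" .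
    moreover have "(\<Sum>e\<in>Eu. (cmod (w e))^2 * Im (mg E w (S - e) z / m0)) \<le> 0"
      by (rule sum_nonpos) (simp add: each mult_nonneg_nonpos)
    ultimately show "Im (mg E w S z / mg E w (S - {u}) z) > 0" using z unfolding m0_def by simp
  qed
  have "mg E w S z \<noteq> 0"
  proof (cases "S = {}")
    case True thus ?thesis using mg_empty[OF sg, of w z] by simp
  next
    case False
    then obtain u where u: "u \<in> S" by blast
    have cu: "card (S - {u}) < card S" using u fS by (meson card_Diff1_less)
    have Su: "S - {u} \<subseteq> V" using less.prems by auto
    have m0: "mg E w (S - {u}) z \<noteq> 0" using less.hyps[OF cu Su] by simp
    have "mg E w S z / mg E w (S - {u}) z \<noteq> 0" using ratio u by force
    thus ?thesis using m0 by simp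
  qed
  thus ?case using ratio by simp
qed



lemma real_bound:
  assumes sg: "simple_graph V E" and hD: "\<forall>v\<in>V. degree E v \<le> D" and D2: "D \<ge> 2"
    and hB: "\<forall>e\<in>E. (cmod (w e))^2 \<le> B" and s_def: "s = sqrt (B * (real D - 1))"
    and spos: "s > 0" and t: "t > 2 * s"
  shows "S \<subseteq> V \<Longrightarrow> mg E w S (t::real) > 0 \<and>
     (\<forall>u\<in>S. card {e\<in>induced_edges E S. u \<in> e} \<le> D - 1 \<longrightarrow> mg E w S t > s * mg E w (S - {u}) t)"
proof (induction "card S" arbitrary: S rule: less_induct)
  case less
  have fS: "finite S" using less.prems sg unfolding simple_graph_def by (meson finite_subset)
  have D1: "real D - 1 > 0" using D2 by simp
  have Bpos: "B > 0"
  proof (rule ccontr)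
    assume "\<not> B > 0"
    hence "B * (real D - 1) \<le> 0" using D1 by (simp add: mult_nonpos_nonneg)
    hence "s \<le> 0" unfolding s_def by simp
    thus False using spos by simp
  qed
  have ss: "s * s = B * (real D - 1)" unfolding s_def using Bpos D1 by simp
  define c where "c = s / (real D - 1)"
  have Bs: "B / s = c" unfolding c_def using ss spos D1 by (simp add: field_simps)
  have cpos: "c > 0" unfolding c_def using spos D1 by simp
  have core: "\<And>u d. u \<in> S \<Longrightarrow> card {e\<in>induced_edges E S. u \<in> e} \<le> d \<Longrightarrow>
      mg E w (S - {u}) t > 0 \<and> mg E w S t \<ge> (t - real d * c) * mg E w (S - {u}) t"
  proof -
    fix u d assume u: "u \<in> S" and dd: "card {e\<in>induced_edges E S. u \<in> e} \<le> d"
    define m0 where "m0 = mg E w (S - {u}) t"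
    define Eu where "Eu = {e\<in>induced_edges E S. u \<in> e}"
    have cu: "card (S - {u}) < card S" using u fS by (meson card_Diff1_less)
    have Su: "S - {u} \<subseteq> V" using less.prems by auto
    note IHu = less.hyps[OF cu Su]
    hence m0: "m0 > 0" unfolding m0_def by simp
    have each: "\<And>e. e \<in> Eu \<Longrightarrow> (cmod (w e))^2 * mg E w (S - e) t \<le> c * m0"
    proof -
      fix e assume e: "e \<in> Eu"
      obtain v where v: "v \<noteq> u" "v \<in> S - {u}" "e = {u, v}" "S - e = S - {u} - {v}"
        using other_end[OF sg e[unfolded Eu_def]] by blast
      have eS: "e \<in> induced_edges E S" using e unfolding Eu_def by simp
      have "card {f\<in>induced_edges E (S - {u}). v \<in> f} < card {f\<in>induced_edges E S. v \<in> f}"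
        using deg_drop[OF sg less.prems eS v(3)] v(1) by simp
      moreover have "card {f\<in>induced_edges E S. v \<in> f} \<le> D"
        using deg_le[OF sg, of S v] hD v(2) less.prems by fastforce
      ultimately have dv: "card {f\<in>induced_edges E (S - {u}). v \<in> f} \<le> D - 1" by linarith
      have r: "m0 > s * mg E w (S - e) t" using IHu v(2) dv unfolding m0_def v(4) by blast
      have cSe: "card (S - e) < card S" using cu v(4) fS
        by (metis Diff_subset card_mono finite_Diff le_less_trans v(2) card_Diff1_less)
      have "S - e \<subseteq> V" using less.prems by auto
      hence pe: "mg E w (S - e) t > 0" using less.hyps[OF cSe] by simp
      have le1: "(cmod (w e))^2 \<le> B" using hB eS unfolding induced_edges_def by auto
      have "(cmod (w e))^2 * mg E w (S - e) t \<le> B * mg E w (S - e) t"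
        using le1 pe by (simp add: mult_right_mono)
      also have "\<dots> = (B / s) * (s * mg E w (S - e) t)" using spos by simp
      also have "\<dots> \<le> (B / s) * m0" using r Bpos spos by (intro mult_left_mono) auto
      finally show "(cmod (w e))^2 * mg E w (S - e) t \<le> c * m0" using Bs by simp
    qed
    have "(\<Sum>e\<in>Eu. (cmod (w e))^2 * mg E w (S - e) t) \<le> (\<Sum>e\<in>Eu. c * m0)"
      by (rule sum_mono) (rule each)
    also have "\<dots> = real (card Eu) * (c * m0)" by simp
    also have "\<dots> \<le> real d * (c * m0)"
      using dd cpos m0 unfolding Eu_def by (intro mult_right_mono) auto
    finally have sb: "(\<Sum>e\<in>Eu. (cmod (w e))^2 * mg E w (S - e) t) \<le> real d * (c * m0)" .
    have "mg E w S t = t * m0 - (\<Sum>e\<in>Eu. (cmod (w e))^2 * mg E w (S - e) t)"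
      unfolding mg_rec[OF sg less.prems u] m0_def Eu_def by simp
    hence "mg E w S t \<ge> (t - real d * c) * m0" using sb by (simp add: algebra_simps)
    thus "mg E w (S - {u}) t > 0 \<and> mg E w S t \<ge> (t - real d * c) * mg E w (S - {u}) t"
      using m0 unfolding m0_def by simp
  qed
  have ratio: "\<forall>u\<in>S. card {e\<in>induced_edges E S. u \<in> e} \<le> D - 1 \<longrightarrow> mg E w S t > s * mg E w (S - {u}) t"
  proof (intro ballI impI)
    fix u assume u: "u \<in> S" and dd: "card {e\<in>induced_edges E S. u \<in> e} \<le> D - 1"
    note cr = core[OF u dd]
    have "real (D - 1) * c = s" unfolding c_def using D1 D2 by (simp add: of_nat_diff)
    hence "mg E w S t \<ge> (t - s) * mg E w (S - {u}) t" using cr by simp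
    moreover have "(t - s) * mg E w (S - {u}) t > s * mg E w (S - {u}) t"
      using cr t spos by (intro mult_strict_right_mono) auto
    ultimately show "mg E w S t > s * mg E w (S - {u}) t" by linarith
  qed
  have "mg E w S t > 0"
  proof (cases "S = {}")
    case True thus ?thesis using mg_empty[OF sg, of w t] by simp
  next
    case False
    then obtain u where u: "u \<in> S" by blast
    have "card {e\<in>induced_edges E S. u \<in> e} \<le> D"
      using deg_le[OF sg, of S u] hD u less.prems by fastforce
    note cr = core[OF u this]
    have "real D * c = s + c" unfolding c_def using D1 by (simp add: field_simps)
    moreover have "c \<le> s" unfolding c_def using D1 D2 spos by (simp add: divide_le_eq)
    ultimately have "t - real D * c > 0" using t by linarith
    hence "(t - real D * c) * mg E w (S - {u}) t > 0" using cr by simp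
    thus ?thesis using cr by linarith
  qed
  thus ?case using ratio by simp
qed



theorem corollary3p5:
  fixes V :: "'a set" and E :: "'a set set" and w :: "'a set \<Rightarrow> complex"
    and w1 :: "'a \<Rightarrow> complex"
  assumes "simple_graph V E"
    and "\<forall>e\<in>E. w e \<noteq> 0"
    and "\<forall>u\<in>V. w1 u = 0"
    and "max_degree V E > 1"
  shows "\<forall>x::complex. eta V E w w1 x = 0 \<longrightarrow>
           x \<in> \<real> \<and>
           \<bar>Re x\<bar> \<le> 2 * Max ((\<lambda>e. cmod (w e)) ` E) * sqrt (real (max_degree V E) - 1)"
proof (intro allI impI)
  fix x :: complex
  assume ex: "eta V E w w1 x = 0"
  note sg = assms(1)
  have fV: "finite V" using sg unfolding simple_graph_def by simp
  have fE: "finite E" using sg unfolding simple_graph_def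
    by (meson Pow_iff finite_Pow_iff finite_subset subsetI)
  have mx: "mg E w V x = 0" using ex eta_mg[OF sg assms(3)] by simp
  have Vne: "V \<noteq> {}"
  proof
    assume "V = {}"
    thus False using mx mg_empty[OF sg, of w x] by simp
  qed
  have Im0: "Im x = 0"
  proof (rule ccontr)
    assume "Im x \<noteq> 0"
    hence "Im x > 0 \<or> Im (cnj x) > 0" by auto
    moreover have "mg E w V (cnj x) = 0" using mx mg_cnj[of E w V x] by simp
    ultimately show False using imag_pos[OF sg, of x V w] imag_pos[OF sg, of "cnj x" V w] mx by auto
  qed
  hence xR: "x \<in> \<real>" by (simp add: complex_is_Real_iff)
  define D where "D = max_degree V E"
  have D2: "D \<ge> 2" using assms(4) unfolding D_def by simp
  have hD: "\<forall>v\<in>V. degree E v \<le> D" unfolding D_def max_degree_def using fV by simp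
  obtain v0 where v0: "v0 \<in> V" "degree E v0 = D"
  proof -
    have "D \<in> degree E ` V" unfolding D_def max_degree_def using fV Vne by (intro Max_in) auto
    thus ?thesis using that by auto
  qed
  have "card {e\<in>E. v0 \<in> e} > 0" using v0 D2 unfolding degree_def by simp
  then obtain e0 where e0: "e0 \<in> E" by (metis (no_types, lifting) card.empty less_irrefl empty_Collect_eq)
  define b0 where "b0 = Max ((\<lambda>e. cmod (w e)) ` E)"
  have bge: "\<And>e. e \<in> E \<Longrightarrow> cmod (w e) \<le> b0" unfolding b0_def using fE by simp
  have b0pos: "b0 > 0" using bge[OF e0] assms(2) e0 by (meson less_le_trans zero_less_norm_iff)
  define B where "B = b0^2"
  have hB: "\<forall>e\<in>E. (cmod (w e))^2 \<le> B" unfolding B_def using bge by (simp add: power_mono)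
  define s where "s = sqrt (B * (real D - 1))"
  have s_eq: "s = b0 * sqrt (real D - 1)" unfolding s_def B_def using b0pos
    by (simp add: real_sqrt_mult)
  have spos: "s > 0" unfolding s_eq using b0pos D2 by simp
  define t where "t = Re x"
  have xt: "x = of_real t" unfolding t_def using Im0 by (simp add: complex_eq_iff)
  have mt: "mg E w V t = 0" using mx unfolding xt mg_of_real by simp
  have "\<bar>t\<bar> \<le> 2 * s"
  proof (rule ccontr)
    assume "\<not> \<bar>t\<bar> \<le> 2 * s"
    hence "t > 2 * s \<or> - t > 2 * s" by linarith
    thus False
    proof
      assume "t > 2 * s"
      thus False using real_bound[OF sg hD D2 hB s_def spos, of t V] mt by simp
    next
      assume "- t > 2 * s"
      hence "mg E w V (- t) > 0" using real_bound[OF sg hD D2 hB s_def spos, of "- t" V] by simp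
      moreover have "mg E w V (- t) = 0" using mg_neg[OF sg, of V w t] mt by simp
      ultimately show False by simp
    qed
  qed
  thus "x \<in> \<real> \<and> \<bar>Re x\<bar> \<le> 2 * Max ((\<lambda>e. cmod (w e)) ` E) * sqrt (real (max_degree V E) - 1)"
    using xR unfolding t_def s_eq b0_def D_def by (simp add: mult.assoc)
qed

end
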